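(* Let $G=(F\cup C,E)$ be a finite bipartite graph with $F\neq\emptyset$ and no isolated vertices. In one iteration of FacilitySelect on $G$, the expected number of edges removed is at least $\sqrt{|E|}$.
   Context: Let $G=(F\cup C,E)$ be a finite bipartite graph with parts $F$ (facilities) and $C$ (clients). The facility graph $G_F=(F,E_F)$ has an edge $\{i,i'\}$ ($i\ne i'$) iff $i$ and $i'$ have a common neighbor in $G$. Write $\deg(\cdot)$, $N(\cdot)$ for degree/neighborhood in $G$, $\deg_F(\cdot)$, $N_F(\cdot)$ for those in $G_F$. One iteration of FacilitySelect: every $i\in F$ independently draws $r_i$ uniformly from $[0,1]$; let $I=\{i\in F: r_i>\max_{i'\in N_F(i)} r_{i'}\}$ (the maximum over the empty set being $-\infty$); then all vertices of $I\cup N(I)$ are deleted from $G$ together with all their incident edges. "Clients removed" are the clients in $N(I)$; "edges removed" are the edges incident to deleted vertices. FacilitySelect repeats iterations while $F\ne\emptyset$. *)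

theory Defs
  imports "HOL-Probability.Probability"
begin

text \<open>A bipartite graph G = (F \<union> C, E) is given by facilities F :: 'f set,
 clients C :: 'c set and edges E \<subseteq> F \<times> C (pair (i,c) = edge {i,c}).\<close>

definition bip_graph :: "'f set \<Rightarrow> 'c set \<Rightarrow> ('f \<times> 'c) set \<Rightarrow> bool" where
  "bip_graph F C E \<longleftrightarrow> finite F \<and> finite C \<and> E \<subseteq> F \<times> C"

definition no_isolated :: "'f set \<Rightarrow> 'c set \<Rightarrow> ('f \<times> 'c) set \<Rightarrow> bool" where
  "no_isolated F C E \<longleftrightarrow> (\<forall>i\<in>F. \<exists>c. (i, c) \<in> E) \<and> (\<forall>c\<in>C. \<exists>i. (i, c) \<in> E)"

definition facN :: "'f set \<Rightarrow> ('f \<times> 'c) set \<Rightarrow> 'f \<Rightarrow> 'f set" where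
  "facN F E i = {i' \<in> F. i' \<noteq> i \<and> (\<exists>c. (i, c) \<in> E \<and> (i', c) \<in> E)}"

text \<open>Selected set I: r_i exceeds r_{i'} for all neighbours i' in G_F
  (i.e. r_i > max over N_F(i), the max of the empty set being -infinity).\<close>
definition selected :: "'f set \<Rightarrow> ('f \<times> 'c) set \<Rightarrow> ('f \<Rightarrow> real) \<Rightarrow> 'f set" where
  "selected F E r = {i \<in> F. \<forall>i' \<in> facN F E i. r i' < r i}"

definition clientN :: "('f \<times> 'c) set \<Rightarrow> 'f set \<Rightarrow> 'c set" where
  "clientN E S = {c. \<exists>i\<in>S. (i, c) \<in> E}"

definition removed_edges :: "'f set \<Rightarrow> ('f \<times> 'c) set \<Rightarrow> ('f \<Rightarrow> real) \<Rightarrow> ('f \<times> 'c) set" where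
  "removed_edges F E r = {(i, c) \<in> E. i \<in> selected F E r \<or> c \<in> clientN E (selected F E r)}"

definition rand_space :: "'f set \<Rightarrow> ('f \<Rightarrow> real) measure" where
  "rand_space F = PiM F (\<lambda>_. uniform_measure lborel {0..1::real})"

end

theory Submission
  imports Defs
begin

abbreviation "U \<equiv> uniform_measure lborel {0..1::real}"

lemma prob_U: "prob_space U"
  by (rule prob_space_uniform_measure) auto

lemma pps: "product_prob_space (\<lambda>_. U)"
proof -
  interpret prob_space U by (rule prob_U)
  show ?thesis
    by (intro product_prob_space.intro product_sigma_finite.intro product_prob_space_axioms.intro)
       (auto simp: prob_U sigma_finite_measure)
qed

lemma power_int: "((\<lambda>y::real. y ^ d) has_integral 1 / (real d + 1)) {0..1}"
proof -
  have "((\<lambda>y::real. y ^ d) has_integral (1::real) ^ (d+1) / (real d + 1) - 0 ^ (d+1) / (real d + 1)) {0..1}"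
    apply (rule fundamental_theorem_of_calculus)
     apply simp
    apply (auto intro!: derivative_eq_intros simp: has_real_derivative_iff_has_vector_derivative[symmetric])
    apply (cases d)
     apply (auto simp: field_simps)
    done
  then show ?thesis by simp
qed

lemma U_less: "y \<in> {0..1} \<Longrightarrow> emeasure U {..<y} = ennreal y"
proof -
  assume y: "y \<in> {0..1}"
  have "{0..1} \<inter> {..<y} = {0..<y}" using y by auto
  then show ?thesis using y by (simp add: divide_ennreal_def)
qed

lemma prob_sel:
  assumes fin: "finite F" and iF: "i \<in> F" and NF: "N \<subseteq> F - {i}"
  shows "emeasure (PiM F (\<lambda>_. U)) {r \<in> space (PiM F (\<lambda>_. U)). \<forall>j\<in>N. r j < r i}
           = ennreal (1 / (real (card N) + 1))"
proof -
  interpret product_prob_space "\<lambda>_. U" F by (rule pps)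
  define F' where "F' = F - {i}"
  have F: "F = insert i F'" using iF by (auto simp: F'_def)
  have fin': "finite F'" "i \<notin> F'" using fin by (auto simp: F'_def)
  have NF': "N \<subseteq> F'" using NF by (auto simp: F'_def)
  have finN: "finite N" using NF' fin'(1) finite_subset by blast
  define A where "A = {r \<in> space (PiM (insert i F') (\<lambda>_. U)). \<forall>j\<in>N. r j < r i}"
  have Ameas: "A \<in> sets (PiM (insert i F') (\<lambda>_. U))"
    unfolding A_def using NF' finN by measurable (use NF' in auto)
  define B where "B y = PiE F' (\<lambda>j. if j \<in> N then {..<y} else UNIV)" for y :: real
  have inner: "(\<integral>\<^sup>+ x. indicator A (x(i := y)) \<partial>PiM F' (\<lambda>_. U)) = emeasure U {..<y} ^ card N" for y
  proof -
    have "(\<integral>\<^sup>+ x. indicator A (x(i := y)) \<partial>PiM F' (\<lambda>_. U)) = (\<integral>\<^sup>+ x. indicator (B y) x \<partial>PiM F' (\<lambda>_. U))"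
    proof (rule nn_integral_cong)
      fix x assume x: "x \<in> space (PiM F' (\<lambda>_. U))"
      have "x(i := y) \<in> A \<longleftrightarrow> x \<in> B y"
        using x NF' fin'(2) unfolding A_def B_def
        by (auto simp: space_PiM PiE_def extensional_def Pi_def split: if_splits)
      then show "indicator A (x(i := y)) = indicator (B y) x" by (simp add: indicator_def)
    qed
    also have "\<dots> = emeasure (PiM F' (\<lambda>_. U)) (B y)"
      by (rule nn_integral_indicator) (auto simp: B_def intro!: sets_PiM_I_finite fin')
    also have "\<dots> = (\<Prod>j\<in>F'. emeasure U (if j \<in> N then {..<y} else UNIV))"
      unfolding B_def by (rule emeasure_PiM) (auto simp: fin')
    also have "\<dots> = (\<Prod>j\<in>F'. if j \<in> N then emeasure U {..<y} else 1)"
      by (rule prod.cong) (auto simp: emeasure_space_1[simplified])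
    also have "\<dots> = emeasure U {..<y} ^ card N"
      using NF' fin' by (simp add: prod.If_cases Int_absorb1)
    finally show ?thesis .
  qed
  have "emeasure (PiM F (\<lambda>_. U)) {r \<in> space (PiM F (\<lambda>_. U)). \<forall>j\<in>N. r j < r i}
      = emeasure (PiM (insert i F') (\<lambda>_. U)) A" unfolding A_def F ..
  also have "\<dots> = (\<integral>\<^sup>+ r. indicator A r \<partial>PiM (insert i F') (\<lambda>_. U))"
    using Ameas by simp
  also have "\<dots> = (\<integral>\<^sup>+ y. (\<integral>\<^sup>+ x. indicator A (x(i := y)) \<partial>PiM F' (\<lambda>_. U)) \<partial>U)"
    by (rule product_nn_integral_insert_rev) (use fin' Ameas in auto)
  also have "\<dots> = (\<integral>\<^sup>+ y. ennreal (y ^ card N) \<partial>U)"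
  proof (rule nn_integral_cong_AE)
    have "AE y in U. y \<in> {0..1}" by (rule AE_uniform_measureI) auto
    then show "AE y in U. (\<integral>\<^sup>+ x. indicator A (x(i := y)) \<partial>PiM F' (\<lambda>_. U)) = ennreal (y ^ card N)"
      by eventually_elim (simp only: inner U_less, simp add: ennreal_power)
  qed
  also have "\<dots> = (\<integral>\<^sup>+ y. ennreal (y ^ card N) * indicator {0..1} y \<partial>lborel) / emeasure lborel {0..1::real}"
    by (rule nn_integral_uniform_measure) auto
  also have "\<dots> = ennreal (1 / (real (card N) + 1))"
    using nn_integral_has_integral_lebesgue'[OF _ power_int[of "card N"]]
    by (simp add: divide_ennreal_def)
  finally show ?thesis .
qed

lemma comb:
  fixes s d :: "'f \<Rightarrow> real"
  assumes fin: "finite F" and ne: "F \<noteq> {}"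
    and sd: "\<And>i. i \<in> F \<Longrightarrow> d i + 1 \<le> s i"
    and dF: "\<And>i. i \<in> F \<Longrightarrow> d i + 1 \<le> real (card F)"
    and d0: "\<And>i. i \<in> F \<Longrightarrow> 0 \<le> d i"
    and sE: "e \<le> (\<Sum>i\<in>F. s i)"
  shows "sqrt e \<le> (\<Sum>i\<in>F. s i / (d i + 1))"
proof -
  let ?T = "\<Sum>i\<in>F. s i / (d i + 1)"
  have cF: "real (card F) > 0" using fin ne by (simp add: card_gt_0_iff)
  have "real (card F) = (\<Sum>i\<in>F. 1)" by simp
  also have "\<dots> \<le> ?T"
  proof (rule sum_mono)
    fix i assume i: "i \<in> F"
    have "d i + 1 > 0" using d0[OF i] by linarith
    then show "1 \<le> s i / (d i + 1)" using sd[OF i] by (simp add: le_divide_eq)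
  qed
  finally have T1: "real (card F) \<le> ?T" .
  have "(\<Sum>i\<in>F. s i) / real (card F) = (\<Sum>i\<in>F. s i / real (card F))"
    by (simp add: sum_divide_distrib)
  also have "\<dots> \<le> ?T"
  proof (rule sum_mono)
    fix i assume i: "i \<in> F"
    have "0 \<le> s i" using sd[OF i] d0[OF i] by linarith
    then show "s i / real (card F) \<le> s i / (d i + 1)"
      using dF[OF i] d0[OF i] by (intro divide_left_mono) auto
  qed
  finally have T2: "(\<Sum>i\<in>F. s i) / real (card F) \<le> ?T" .
  have "e \<le> real (card F) * ((\<Sum>i\<in>F. s i) / real (card F))"
    using sE cF by simp
  also have "\<dots> \<le> ?T * ?T"
  proof -
    have "0 \<le> (\<Sum>i\<in>F. s i)"
    proof (rule sum_nonneg)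
      fix i assume i: "i \<in> F" show "0 \<le> s i" using sd[OF i] d0[OF i] by linarith
    qed
    then show ?thesis using T1 T2 cF by (intro mult_mono) auto
  qed
  finally have "e \<le> ?T ^ 2" by (simp add: power2_eq_square)
  moreover have "0 \<le> ?T" using T1 by simp
  ultimately show ?thesis by (simp add: real_le_lsqrt)
qed

theorem corollary1:
  fixes F :: "'f set" and C :: "'c set" and E :: "('f \<times> 'c) set"
  assumes "bip_graph F C E"
    and "F \<noteq> {}"
    and "no_isolated F C E"
  shows "(\<integral>r. real (card (removed_edges F E r)) \<partial>rand_space F) \<ge> sqrt (real (card E))"
proof -
  have finF: "finite F" and finC: "finite C" and EFC: "E \<subseteq> F \<times> C"
    using assms(1) by (auto simp: bip_graph_def)
  have finE: "finite E" using finF finC EFC finite_subset by blast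
  define M where "M = rand_space F"
  have Mdef: "M = PiM F (\<lambda>_. U)" by (simp add: M_def rand_space_def)
  interpret prob_space M unfolding Mdef
    by (rule prob_space_PiM) (rule prob_U)
  define Q where "Q i r = (\<forall>j\<in>F. j \<in> facN F E i \<longrightarrow> r j < r i)" for i and r :: "'f \<Rightarrow> real"
  define A where "A i = {r \<in> space M. Q i r}" for i
  define S where "S i = {(j, c) \<in> E. (i, c) \<in> E}" for i
  define s where "s i = real (card (S i))" for i
  have finrem: "finite (removed_edges F E r)" for r
    by (rule finite_subset[OF _ finE]) (auto simp: removed_edges_def)
  have finS: "finite (S i)" for i
    by (rule finite_subset[OF _ finE]) (auto simp: S_def)
  define d where "d i = real (card (facN F E i))" for i
  have d0: "0 \<le> d i" for i unfolding d_def by simp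
  have facN_sub: "facN F E i \<subseteq> F - {i}" for i by (auto simp: facN_def)
  have finfacN: "finite (facN F E i)" for i
    using finF facN_sub finite_subset by (metis finite_Diff)
  have Q_iff: "Q i r \<longleftrightarrow> (\<forall>j\<in>facN F E i. r j < r i)" for i r
    using facN_sub unfolding Q_def by blast
  have sel_iff: "i \<in> selected F E r \<longleftrightarrow> i \<in> F \<and> Q i r" for i r
    by (simp add: selected_def Q_iff)
  have Qmeas: "i \<in> F \<Longrightarrow> Measurable.pred M (Q i)" for i
    unfolding Q_def Mdef using finF by measurable
  have Ameas: "i \<in> F \<Longrightarrow> A i \<in> sets M" for i
    unfolding A_def using Qmeas by measurable
  have probA: "i \<in> F \<Longrightarrow> measure M (A i) = 1 / (d i + 1)" for i
  proof -
    assume i: "i \<in> F"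
    have "A i = {r \<in> space (PiM F (\<lambda>_. U)). \<forall>j\<in>facN F E i. r j < r i}"
      unfolding A_def Mdef Q_iff ..
    then have "emeasure M (A i) = ennreal (1 / (d i + 1))"
      unfolding d_def using prob_sel[OF finF i facN_sub] Mdef by simp
    then show ?thesis by (simp add: measure_def d_def)
  qed
  have pw: "(\<Sum>i\<in>F. s i * indicator (A i) r) \<le> real (card (removed_edges F E r))"
    if r: "r \<in> space M" for r
  proof -
    define I where "I = selected F E r"
    have IF: "I \<subseteq> F" by (auto simp: I_def selected_def)
    have "(\<Sum>i\<in>F. s i * indicator (A i) r) = (\<Sum>i\<in>I. s i)"
    proof -
      have "(\<Sum>i\<in>F. s i * indicator (A i) r) = (\<Sum>i\<in>F. if i \<in> I then s i else 0)"
        by (rule sum.cong) (auto simp: A_def I_def sel_iff r)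
      also have "\<dots> = (\<Sum>i\<in>I. s i)"
        using IF finF by (simp add: sum.If_cases Int_absorb1)
      finally show ?thesis .
    qed
    also have "\<dots> = real (card (\<Union>i\<in>I. S i))"
    proof -
      have "card (\<Union>i\<in>I. S i) = (\<Sum>i\<in>I. card (S i))"
      proof (rule card_UN_disjoint)
        show "finite I" using IF finF finite_subset by blast
        show "\<forall>i\<in>I. finite (S i)" using finS by auto
        show "\<forall>i\<in>I. \<forall>j\<in>I. i \<noteq> j \<longrightarrow> S i \<inter> S j = {}"
        proof (intro ballI impI)
          fix i j assume i: "i \<in> I" and j: "j \<in> I" and ij: "i \<noteq> j"
          show "S i \<inter> S j = {}"
          proof (rule ccontr)
            assume "S i \<inter> S j \<noteq> {}"
            then obtain k c where "(i, c) \<in> E" "(j, c) \<in> E" by (auto simp: S_def)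
            then have "j \<in> facN F E i" "i \<in> facN F E j"
              using i j ij IF by (auto simp: facN_def)
            then show False using i j unfolding I_def selected_def by fastforce
          qed
        qed
      qed
      then show ?thesis by (simp add: s_def)
    qed
    also have "\<dots> \<le> real (card (removed_edges F E r))"
    proof -
      have "(\<Union>i\<in>I. S i) \<subseteq> removed_edges F E r"
        by (auto simp: S_def removed_edges_def clientN_def I_def)
      moreover have "finite (removed_edges F E r)" by (rule finrem)
      ultimately show ?thesis by (simp add: card_mono)
    qed
    finally show ?thesis .
  qed
  define P where "P e r = ((\<exists>i\<in>F. i = fst e \<and> Q i r) \<or> (\<exists>i\<in>F. (i, snd e) \<in> E \<and> Q i r))" for e r
  have card_eq: "real (card (removed_edges F E r)) = (\<Sum>e\<in>E. if P e r then 1 else 0)" for r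
  proof -
    have "removed_edges F E r = {e \<in> E. P e r}"
      by (auto simp: removed_edges_def P_def sel_iff clientN_def)
    then show ?thesis using finE by (simp add: sum.inter_filter[symmetric])
  qed
  have meas: "(\<lambda>r. real (card (removed_edges F E r))) \<in> borel_measurable M"
    unfolding card_eq P_def using Qmeas finF finE by measurable
  have int1: "integrable M (\<lambda>r. real (card (removed_edges F E r)))"
  proof (rule integrable_const_bound[where B = "real (card E)"])
    show "AE x in M. norm (real (card (removed_edges F E x))) \<le> real (card E)"
      using finE finrem by (auto intro!: card_mono simp: removed_edges_def)
  qed (rule meas)
  have int2: "integrable M (\<lambda>r. \<Sum>i\<in>F. s i * indicator (A i) r)"
    apply (rule Bochner_Integration.integrable_sum)
    apply (rule integrable_mult_right)
    apply (rule integrable_real_indicator)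
    using Ameas apply simp
    apply (simp add: less_top[symmetric])
    done
  have "(\<Sum>i\<in>F. s i / (d i + 1)) = (\<integral>r. (\<Sum>i\<in>F. s i * indicator (A i) r) \<partial>M)"
  proof -
    have "(\<integral>r. (\<Sum>i\<in>F. s i * indicator (A i) r) \<partial>M) = (\<Sum>i\<in>F. (\<integral>r. s i * indicator (A i) r \<partial>M))"
      by (rule Bochner_Integration.integral_sum) (use Ameas in \<open>auto simp: less_top[symmetric]\<close>)
    also have "\<dots> = (\<Sum>i\<in>F. s i / (d i + 1))"
      using Ameas probA by (intro sum.cong) auto
    finally show ?thesis by simp
  qed
  also have "\<dots> \<le> (\<integral>r. real (card (removed_edges F E r)) \<partial>M)"
    by (rule integral_mono[OF int2 int1 pw])
  finally have main: "(\<Sum>i\<in>F. s i / (d i + 1)) \<le> (\<integral>r. real (card (removed_edges F E r)) \<partial>M)" .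
  have sd: "d i + 1 \<le> s i" if i: "i \<in> F" for i
  proof -
    obtain c where c: "(i, c) \<in> E" using assms(3) i by (auto simp: no_isolated_def)
    have "insert i (facN F E i) \<subseteq> fst ` S i"
    proof
      fix j assume "j \<in> insert i (facN F E i)"
      then show "j \<in> fst ` S i"
      proof
        assume "j = i" then show ?thesis using c by (force simp: S_def)
      next
        assume "j \<in> facN F E i"
        then obtain c' where "(i, c') \<in> E" "(j, c') \<in> E" by (auto simp: facN_def)
        then show ?thesis by (force simp: S_def)
      qed
    qed
    moreover have "finite (S i)" by (rule finS)
    ultimately have "card (insert i (facN F E i)) \<le> card (S i)"
      by (meson card_image_le card_mono finite_imageI le_trans)
    moreover have "card (insert i (facN F E i)) = card (facN F E i) + 1"
      using finfacN by (simp add: facN_def)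
    ultimately show ?thesis by (simp add: d_def s_def)
  qed
  have dF: "d i + 1 \<le> real (card F)" if i: "i \<in> F" for i
  proof -
    have "insert i (facN F E i) \<subseteq> F" using i facN_sub by auto
    then have "card (insert i (facN F E i)) \<le> card F" using finF by (rule card_mono[rotated])
    moreover have "card (insert i (facN F E i)) = card (facN F E i) + 1"
      using finfacN by (simp add: facN_def)
    ultimately show ?thesis by (simp add: d_def)
  qed
  have sE: "real (card E) \<le> (\<Sum>i\<in>F. s i)"
  proof -
    have "E \<subseteq> (\<Union>i\<in>F. S i)" using EFC by (force simp: S_def)
    then have "card E \<le> card (\<Union>i\<in>F. S i)"
      using finF finS by (intro card_mono) auto
    also have "\<dots> \<le> (\<Sum>i\<in>F. card (S i))" by (rule card_UN_le[OF finF])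
    finally show ?thesis by (simp add: s_def flip: of_nat_sum)
  qed
  have "sqrt (real (card E)) \<le> (\<Sum>i\<in>F. s i / (d i + 1))"
    by (rule comb[OF finF assms(2) sd dF d0 sE])
  with main show ?thesis unfolding M_def by linarith
qed

end
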